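(* Let $t\ge1$ be an integer and $\mathcal{I}\subseteq[K]$. Let $x,y\in\mathbb{R}^K$ with $x_i,y_i\in(0,1]$ for all $i\in\mathcal{I}$ and $\sum_{i\in\mathcal{I}}x_i=\sum_{i\in\mathcal{I}}y_i$, and suppose there is $c\in\mathbb{R}$ with $\nabla\phi^{t+1}_{\mathcal{I}}(y)=\nabla\phi^t_{\mathcal{I}}(x)-\hat\ell^t_{\mathcal{I}}+c\cdot\mathbf{1}_{\mathcal{I}}$ (coordinatewise on $\mathcal{I}$). Then $$\sum_{i\in\mathcal{I}}y_i^{4/3}\le2\Big(1+\frac1t\Big)^2\sum_{i\in\mathcal{I}}x_i^{4/3}\le8\sum_{i\in\mathcal{I}}x_i^{4/3}.$$
   Context: $\phi^s(x)=-3K^{1/6}\sqrt{s}\sum_{i\in[K]}x_i^{2/3}$ (the $2/3$-Tsallis regularizer of Decoupled-Tsallis-INF) and $\phi^s_{\mathcal{I}}(x)=-3K^{1/6}\sqrt{s}\sum_{i\in\mathcal{I}}x_i^{2/3}$. For a vector $v$, $v_{\mathcal{I}}$ agrees with $v$ on $\mathcal{I}$ and is $0$ elsewhere; $\mathbf{1}_{\mathcal{I}}$ is the indicator vector of $\mathcal{I}$. $\hat\ell^t$ is the loss estimator of Decoupled-Tsallis-INF: $\hat\ell^t_i=\mathbb{1}\{j^t=i\}\ell^t_i/g^t_i$ for some $j^t\in[K]$, $\ell^t\in[0,1]^K$ and a probability vector $g^t$ with positive entries. *)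

theory Defs
  imports "HOL-Analysis.Analysis"
begin

text \<open>Vectors in R^K are functions nat => real, indexed by [K] = {1..K}.\<close>

definition phi_I :: "nat \<Rightarrow> real \<Rightarrow> nat set \<Rightarrow> (nat \<Rightarrow> real) \<Rightarrow> real" where
  "phi_I K s I x = - 3 * real K powr (1/6) * sqrt s * (\<Sum>i\<in>I. x i powr (2/3))"

definition grad_phi_I :: "nat \<Rightarrow> real \<Rightarrow> nat set \<Rightarrow> (nat \<Rightarrow> real) \<Rightarrow> nat \<Rightarrow> real" where
  "grad_phi_I K s I x i = deriv (\<lambda>z. phi_I K s I (x(i := z))) (x i)"

definition loss_est :: "nat \<Rightarrow> (nat \<Rightarrow> real) \<Rightarrow> (nat \<Rightarrow> real) \<Rightarrow> nat \<Rightarrow> real" where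
  "loss_est j l g i = (if j = i then l i / g i else 0)"

end

theory Submission
  imports Defs
begin

lemma gen_lin: fixes P Q u w :: real
  assumes "u \<le> P / 4 + Q / (4/3)" "w = P" shows "P + (4/3*u - 4/3*w) \<le> Q"
  using assms by (simp add: field_simps)

lemma tangent43:
  fixes a b :: real assumes a: "0 < a" and b: "0 \<le> b"
  shows "a powr (4/3) + 4/3 * a powr (1/3) * (b - a) \<le> b powr (4/3)"
proof -
  have Y: "a powr (1/3) * b \<le> (a powr (1/3)) powr 4 / 4 + b powr (4/3) / (4/3)"
    by (rule Youngs_inequality) (use b in auto)
  have e1: "(a powr (1/3)) powr 4 = a powr (4/3)" using a by (simp add: powr_powr)
  have e2: "a powr (1/3) * a = a powr (4/3)"
  proof -
    have "a powr (1/3) * a = a powr (1/3) * a powr 1" using a by simp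
    also have "\<dots> = a powr (1/3 + 1)" by (rule powr_add[symmetric])
    finally show ?thesis by simp
  qed
  have e3: "4/3 * a powr (1/3) * (b - a) = 4/3*(a powr (1/3)*b) - 4/3*(a powr (1/3) * a)"
    by (metis mult.assoc right_diff_distrib)
  have e4: "b powr (4/3) / (4/3) = 3/4 * b powr (4/3)" by simp
  show ?thesis unfolding e3 using gen_lin[OF Y[unfolded e1] e2] .
qed

lemma superadd43:
  fixes p q :: real assumes "0 \<le> p" "0 \<le> q"
  shows "p powr (4/3) + q powr (4/3) \<le> (p + q) powr (4/3)"
proof -
  have s: "z powr (4/3) = z * z powr (1/3)" if "0 \<le> z" for z :: real
  proof (cases "z = 0")
    case False
    have "z powr (1/3) * z = z powr (1/3) * z powr 1" using that False by simp
    also have "\<dots> = z powr (1/3 + 1)" by (rule powr_add[symmetric])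
    finally show ?thesis by (simp add: mult.commute)
  qed simp
  have "p * p powr (1/3) \<le> p * (p+q) powr (1/3)"
    using assms by (intro mult_left_mono powr_mono2) auto
  moreover have "q * q powr (1/3) \<le> q * (p+q) powr (1/3)"
    using assms by (intro mult_left_mono powr_mono2) auto
  ultimately show ?thesis using assms s[of p] s[of q] s[of "p+q"] by (simp add: algebra_simps)
qed

lemma double43:
  fixes a b :: real assumes a: "0 \<le> a" and b: "0 \<le> b"
  shows "(a + b) powr (4/3) \<le> 2 * (a powr (4/3) + b powr (4/3))"
proof (cases "a + b = 0")
  case True then show ?thesis using a b by simp
next
  case False
  define m where "m = (a + b) / 2"
  have m: "0 < m" using False a b by (simp add: m_def)
  have "m powr (4/3) + 4/3 * m powr (1/3) * (a - m) \<le> a powr (4/3)" by (rule tangent43[OF m a])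
  moreover have "m powr (4/3) + 4/3 * m powr (1/3) * (b - m) \<le> b powr (4/3)" by (rule tangent43[OF m b])
  moreover have "4/3 * m powr (1/3) * (a - m) + 4/3 * m powr (1/3) * (b - m) = 4/3 * m powr (1/3) * ((a - m) + (b - m))"
    by (rule distrib_left[symmetric])
  moreover have "4/3 * m powr (1/3) * ((a - m) + (b - m)) = 0" by (simp add: m_def)
  ultimately have h: "2 * m powr (4/3) \<le> a powr (4/3) + b powr (4/3)"
    by linarith
  have "m powr (4/3) = (a + b) powr (4/3) / 2 powr (4/3)"
    unfolding m_def using a b by (simp add: powr_divide)
  moreover have "2 powr (4/3) = 2 * 2 powr (1/3 :: real)"
  proof -
    have "2 * 2 powr (1/3 :: real) = 2 powr 1 * 2 powr (1/3)" by simp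
    also have "\<dots> = 2 powr (1 + 1/3)" by (rule powr_add[symmetric])
    finally show ?thesis by simp
  qed
  moreover have "2 powr (1/3 :: real) \<le> 2"
  proof -
    have "(2::real) powr (1/3) \<le> 2 powr 1" by (intro powr_mono) auto
    then show ?thesis by simp
  qed
  moreover have "0 < (2::real) powr (1/3)" by simp
  ultimately have "(a + b) powr (4/3) = 2 powr (1/3) * (2 * m powr (4/3))"
    by (simp add: field_simps)
  also have "\<dots> \<le> 2 powr (1/3) * (a powr (4/3) + b powr (4/3))"
    using h by (intro mult_left_mono) auto
  finally have "(a + b) powr (4/3) \<le> 2 powr (1/3) * (a powr (4/3) + b powr (4/3))" .
  also have "\<dots> \<le> 2 * (a powr (4/3) + b powr (4/3))"
    using \<open>2 powr (1/3 :: real) \<le> 2\<close> by (intro mult_right_mono) auto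
  finally show ?thesis .
qed

lemma grad_formula:
  assumes fin: "finite I" and iI: "i \<in> I" and xi: "0 < x i"
  shows "grad_phi_I K s I x i = - 2 * real K powr (1/6) * sqrt s * x i powr (-1/3)"
proof -
  define A where "A = (\<Sum>k\<in>I-{i}. x k powr (2/3))"
  have feq: "(\<lambda>z. phi_I K s I (x(i := z))) = (\<lambda>z. - 3 * real K powr (1/6) * sqrt s * (z powr (2/3) + A))"
  proof
    fix z
    have "(\<Sum>k\<in>I. (x(i := z)) k powr (2/3)) = (x(i := z)) i powr (2/3) + (\<Sum>k\<in>I-{i}. (x(i := z)) k powr (2/3))"
      using fin iI by (simp add: sum.remove)
    also have "(\<Sum>k\<in>I-{i}. (x(i := z)) k powr (2/3)) = A"
      unfolding A_def by (intro sum.cong) auto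
    finally show "phi_I K s I (x(i := z)) = - 3 * real K powr (1/6) * sqrt s * (z powr (2/3) + A)"
      unfolding phi_I_def by simp
  qed
  have d: "((\<lambda>z. - 3 * real K powr (1/6) * sqrt s * (z powr (2/3) + A)) has_real_derivative
      - 3 * real K powr (1/6) * sqrt s * (2/3 * x i powr (2/3 - 1) + 0)) (at (x i))"
    by (intro DERIV_cmult DERIV_add has_real_derivative_powr xi DERIV_const)
  have "grad_phi_I K s I x i = - 3 * real K powr (1/6) * sqrt s * (2/3 * x i powr (2/3 - 1) + 0)"
    unfolding grad_phi_I_def feq by (rule DERIV_imp_deriv[OF d])
  also have "\<dots> = - 2 * real K powr (1/6) * sqrt s * x i powr (-1/3)"
    by simp
  finally show ?thesis .
qed

lemma s4: "0 \<le> (z::real) \<Longrightarrow> sqrt z ^ 4 = z^2"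
proof -
  assume z: "0 \<le> z"
  have "sqrt z ^ 4 = (sqrt z ^ 2)^2" by (simp flip: power_mult)
  then show ?thesis using z by simp
qed

lemma mass43:
  fixes x y :: "nat \<Rightarrow> real"
  assumes fin: "finite I" and xp: "\<forall>i\<in>I. 0 < x i" and yp: "\<forall>i\<in>I. 0 < y i"
    and se: "(\<Sum>i\<in>I. x i) = (\<Sum>i\<in>I. y i)" and ge: "\<forall>i\<in>I-{j}. x i \<le> y i"
  shows "(\<Sum>i\<in>I. y i powr (4/3)) \<le> 2 * (\<Sum>i\<in>I. x i powr (4/3))"
proof -
  define S where "S = I - {j}"
  have finS: "finite S" using fin by (simp add: S_def)
  have fx0: "0 \<le> (\<Sum>i\<in>I. x i powr (4/3))" by (intro sum_nonneg) auto
  show ?thesis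
  proof (cases "S = {}")
    case True
    then have "I \<subseteq> {j}" by (auto simp: S_def)
    then have "I = {} \<or> I = {j}" by auto
    then show ?thesis using se fx0 by auto
  next
    case False
    have "Max (y ` S) \<in> y ` S" using finS False by simp
    then obtain k where kS: "k \<in> S" and kM: "y k = Max (y ` S)" by auto
    have kmax: "\<forall>i\<in>S. y i \<le> y k" using finS kM by simp
    have kI: "k \<in> I" "k \<noteq> j" using kS by (auto simp: S_def)
    have xk: "0 < x k" and yk: "0 < y k" using kI xp yp by auto
    define D where "D = (\<Sum>i\<in>S. y i - x i)"
    have D0: "0 \<le> D" unfolding D_def using ge by (intro sum_nonneg) (auto simp: S_def)
    define c where "c = 4/3 * y k powr (1/3)"
    have stepA: "y i powr (4/3) \<le> x i powr (4/3) + c * (y i - x i)" if i: "i \<in> S - {k}" for i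
    proof -
      have iI: "i \<in> I" "x i \<le> y i" "0 < x i" "0 < y i" using i ge xp yp by (auto simp: S_def)
      have t: "y i powr (4/3) + 4/3 * y i powr (1/3) * (x i - y i) \<le> x i powr (4/3)"
        by (rule tangent43) (use iI in auto)
      have e: "4/3 * y i powr (1/3) * (x i - y i) = - (4/3 * y i powr (1/3) * (y i - x i))"
        by (metis minus_diff_eq mult_minus_right)
      have "y i powr (1/3) \<le> y k powr (1/3)" using kmax i iI by (intro powr_mono2) auto
      then have "4/3 * y i powr (1/3) * (y i - x i) \<le> c * (y i - x i)"
        unfolding c_def using iI by (intro mult_right_mono) auto
      then show ?thesis using t e by linarith
    qed
    have "(\<Sum>i\<in>S-{k}. y i powr (4/3)) \<le> (\<Sum>i\<in>S-{k}. x i powr (4/3) + c * (y i - x i))"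
      by (rule sum_mono) (rule stepA)
    also have "\<dots> = (\<Sum>i\<in>S-{k}. x i powr (4/3)) + c * (\<Sum>i\<in>S-{k}. y i - x i)"
      by (simp add: sum.distrib sum_distrib_left)
    finally have sA: "(\<Sum>i\<in>S-{k}. y i powr (4/3)) \<le> (\<Sum>i\<in>S-{k}. x i powr (4/3)) + c * (\<Sum>i\<in>S-{k}. y i - x i)" .
    have Dsplit: "D = (y k - x k) + (\<Sum>i\<in>S-{k}. y i - x i)"
      unfolding D_def using finS kS by (simp add: sum.remove)
    have stepC: "y k powr (4/3) + c * (x k + D - y k) \<le> (x k + D) powr (4/3)"
      unfolding c_def by (rule tangent43) (use yk xk D0 in auto)
    have eC: "x k + D - y k = (\<Sum>i\<in>S-{k}. y i - x i)" using Dsplit by simp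
    have Sy: "(\<Sum>i\<in>S. y i powr (4/3)) = y k powr (4/3) + (\<Sum>i\<in>S-{k}. y i powr (4/3))"
      using finS kS by (simp add: sum.remove)
    have Sx: "(\<Sum>i\<in>S. x i powr (4/3)) = x k powr (4/3) + (\<Sum>i\<in>S-{k}. x i powr (4/3))"
      using finS kS by (simp add: sum.remove)
    have Ssum: "(\<Sum>i\<in>S. y i powr (4/3)) \<le> (\<Sum>i\<in>S-{k}. x i powr (4/3)) + (x k + D) powr (4/3)"
      using sA stepC[unfolded eC] Sy by linarith
    have rest0: "0 \<le> (\<Sum>i\<in>S-{k}. x i powr (4/3))" by (intro sum_nonneg) auto
    have Dxy: "D = (\<Sum>i\<in>S. y i) - (\<Sum>i\<in>S. x i)" unfolding D_def by (simp add: sum_subtractf)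
    show ?thesis
    proof (cases "j \<in> I")
      case True
      have Iins: "I = insert j S" and jS: "j \<notin> S" using True by (auto simp: S_def)
      have sumI: "(\<Sum>i\<in>I. h i) = h j + (\<Sum>i\<in>S. h i)" for h :: "nat \<Rightarrow> real"
        unfolding Iins using finS jS by simp
      have yj: "y j = x j - D" using se sumI[of x] sumI[of y] Dxy by linarith
      have yj0: "0 < y j" and xj0: "0 < x j" using True xp yp by auto
      have "(x k + D) powr (4/3) + y j powr (4/3) \<le> (x k + D + y j) powr (4/3)"
        by (rule superadd43) (use xk D0 yj0 in auto)
      also have "x k + D + y j = x k + x j" using yj by simp
      also have "(x k + x j) powr (4/3) \<le> 2 * (x k powr (4/3) + x j powr (4/3))"
        by (rule double43) (use xk xj0 in auto)
      finally have sup: "(x k + D) powr (4/3) + y j powr (4/3) \<le> 2 * (x k powr (4/3) + x j powr (4/3))" .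
      show ?thesis using sumI[of "\<lambda>i. y i powr (4/3)"] sumI[of "\<lambda>i. x i powr (4/3)"] Sx Ssum sup rest0
        by (smt (verit))
    next
      case False
      then have SI: "S = I" by (auto simp: S_def)
      have "D = 0" using Dxy se SI by simp
      then show ?thesis using Ssum Sx SI fx0 xk by simp
    qed
  qed
qed

theorem lemma26:
  fixes K t j :: nat and I :: "nat set" and x y l g :: "nat \<Rightarrow> real" and c :: real
  assumes "t \<ge> 1"
    and "I \<subseteq> {1..K}"
    and "\<forall>i\<in>I. 0 < x i \<and> x i \<le> 1"
    and "\<forall>i\<in>I. 0 < y i \<and> y i \<le> 1"
    and "(\<Sum>i\<in>I. x i) = (\<Sum>i\<in>I. y i)"
    and "j \<in> {1..K}"
    and "\<forall>i\<in>{1..K}. 0 \<le> l i \<and> l i \<le> 1"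
    and "\<forall>i\<in>{1..K}. 0 < g i"
    and "(\<Sum>i\<in>{1..K}. g i) = 1"
    and "\<forall>i\<in>I. grad_phi_I K (real (t + 1)) I y i
                 = grad_phi_I K (real t) I x i - loss_est j l g i + c"
  shows "(\<Sum>i\<in>I. y i powr (4/3)) \<le> 2 * (1 + 1 / real t)^2 * (\<Sum>i\<in>I. x i powr (4/3))
       \<and> 2 * (1 + 1 / real t)^2 * (\<Sum>i\<in>I. x i powr (4/3)) \<le> 8 * (\<Sum>i\<in>I. x i powr (4/3))"
proof -
  have fin: "finite I" using assms(2) finite_subset by blast
  have xp: "\<forall>i\<in>I. 0 < x i" and yp: "\<forall>i\<in>I. 0 < y i" using assms(3,4) by auto
  have Sx0: "0 \<le> (\<Sum>i\<in>I. x i powr (4/3))" by (intro sum_nonneg) auto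
  have tpos: "0 < real t" using assms(1) by simp
  define r where "r = (1 + 1 / real t)^2"
  have r1: "1 \<le> r" unfolding r_def using tpos by simp
  have r4: "r \<le> 4"
  proof -
    have "1 / real t \<le> 1" using assms(1) by simp
    then have "1 + 1 / real t \<le> 2" by simp
    then have "(1 + 1 / real t)^2 \<le> 2^2" using tpos by (intro power_mono) auto
    then show ?thesis unfolding r_def by simp
  qed
  have second: "2 * r * (\<Sum>i\<in>I. x i powr (4/3)) \<le> 8 * (\<Sum>i\<in>I. x i powr (4/3))"
    using r4 Sx0 by (intro mult_right_mono) auto
  have first: "(\<Sum>i\<in>I. y i powr (4/3)) \<le> 2 * r * (\<Sum>i\<in>I. x i powr (4/3))"
  proof (cases "I = {}")
    case True then show ?thesis by simp
  next
    case False
    then obtain i0 where "i0 \<in> I" by auto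
    then have K1: "1 \<le> K" using assms(2) by auto
    define a where "a = real K powr (1/6)"
    have apos: "0 < a" unfolding a_def using K1 by simp
    define L where "L = loss_est j l g"
    have L0: "0 \<le> L i" if "i \<in> I" for i
      using that assms(2,7,8) unfolding L_def loss_est_def by (auto intro!: divide_nonneg_pos)
    have Lj: "L i = 0" if "i \<noteq> j" for i
      using that unfolding L_def loss_est_def by auto
    have eq: "a * (sqrt (real t + 1) * y i powr (-1/3) - sqrt (real t) * x i powr (-1/3)) = (L i - c) / 2"
      if i: "i \<in> I" for i
    proof -
      have h: "grad_phi_I K (real (t + 1)) I y i = grad_phi_I K (real t) I x i - L i + c"
        using assms(10) i unfolding L_def by auto
      have "grad_phi_I K (real (t + 1)) I y i = - 2 * a * sqrt (real t + 1) * y i powr (-1/3)"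
        using grad_formula[OF fin i, of y K "real (t+1)"] yp i unfolding a_def by simp
      moreover have "grad_phi_I K (real t) I x i = - 2 * a * sqrt (real t) * x i powr (-1/3)"
        using grad_formula[OF fin i, of x K "real t"] xp i unfolding a_def by simp
      ultimately show ?thesis using h by (simp add: algebra_simps)
    qed
    show ?thesis
    proof (cases "c \<le> 0")
      case True
      have pt: "y i powr (4/3) \<le> r * x i powr (4/3)" if i: "i \<in> I" for i
      proof -
        have xi: "0 < x i" and yi: "0 < y i" using i xp yp by auto
        have "0 \<le> (L i - c) / 2" using L0[OF i] True by simp
        then have "0 \<le> sqrt (real t + 1) * y i powr (-1/3) - sqrt (real t) * x i powr (-1/3)"
          using eq[OF i] apos by (metis zero_le_mult_iff not_le)
        then have le: "sqrt (real t) * x i powr (-1/3) \<le> sqrt (real t + 1) * y i powr (-1/3)" by simp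
        have "(sqrt (real t) * x i powr (-1/3))^4 \<le> (sqrt (real t + 1) * y i powr (-1/3))^4"
          using le by (intro power_mono) auto
        moreover have "(x i powr (-1/3))^4 = 1 / x i powr (4/3)"
        proof -
          have "(x i powr (-1/3))^4 = (x i powr (-1/3)) powr (real 4)"
            using xi by (simp add: powr_realpow)
          also have "\<dots> = x i powr (- (4/3))" by (simp add: powr_powr)
          finally show ?thesis by (simp add: powr_minus_divide)
        qed
        moreover have "(y i powr (-1/3))^4 = 1 / y i powr (4/3)"
        proof -
          have "(y i powr (-1/3))^4 = (y i powr (-1/3)) powr (real 4)"
            using yi by (simp add: powr_realpow)
          also have "\<dots> = y i powr (- (4/3))" by (simp add: powr_powr)
          finally show ?thesis by (simp add: powr_minus_divide)
        qed
        moreover have "(sqrt (real t))^4 = (real t)^2" and "(sqrt (real t + 1))^4 = (real t + 1)^2"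
          using tpos s4 by auto
        ultimately have "(real t)^2 / x i powr (4/3) \<le> (real t + 1)^2 / y i powr (4/3)"
          by (simp add: power_mult_distrib)
        moreover have "0 < x i powr (4/3)" "0 < y i powr (4/3)" using xi yi by auto
        ultimately have "(real t)^2 * y i powr (4/3) \<le> (real t + 1)^2 * x i powr (4/3)"
          by (simp add: field_simps)
        moreover have rt: "r * (real t)^2 = (real t + 1)^2"
          unfolding r_def using tpos by (simp add: field_simps power_divide)
        moreover have "(real t + 1)^2 * x i powr (4/3) = (real t)^2 * (r * x i powr (4/3))"
          by (metis rt mult.commute mult.left_commute)
        ultimately have "(real t)^2 * y i powr (4/3) \<le> (real t)^2 * (r * x i powr (4/3))"
          by simp
        moreover have "0 < (real t)^2" using tpos by simp
        ultimately show ?thesis by (simp add: mult_le_cancel_left_pos)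
      qed
      have "(\<Sum>i\<in>I. y i powr (4/3)) \<le> (\<Sum>i\<in>I. r * x i powr (4/3))"
        by (rule sum_mono) (rule pt)
      also have "\<dots> = r * (\<Sum>i\<in>I. x i powr (4/3))" by (simp add: sum_distrib_left)
      also have "\<dots> \<le> 2 * r * (\<Sum>i\<in>I. x i powr (4/3))" using r1 Sx0 by simp
      finally show ?thesis .
    next
      case False
      have ge: "\<forall>i\<in>I-{j}. x i \<le> y i"
      proof
        fix i assume i: "i \<in> I - {j}"
        then have iI: "i \<in> I" and ij: "i \<noteq> j" by auto
        have xi: "0 < x i" and yi: "0 < y i" using iI xp yp by auto
        have "(L i - c) / 2 < 0" using Lj[OF ij] False by simp
        then have "sqrt (real t + 1) * y i powr (-1/3) - sqrt (real t) * x i powr (-1/3) < 0"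
          using eq[OF iI] apos by (metis mult_pos_pos not_le order_le_less zero_le_mult_iff)
        moreover have "sqrt (real t) * x i powr (-1/3) \<le> sqrt (real t + 1) * x i powr (-1/3)"
          by (intro mult_right_mono) auto
        ultimately have "sqrt (real t + 1) * y i powr (-1/3) < sqrt (real t + 1) * x i powr (-1/3)"
          by linarith
        then have lt: "y i powr (-1/3) < x i powr (-1/3)" by (simp add: mult_less_cancel_left)
        show "x i \<le> y i"
        proof (rule ccontr)
          assume "\<not> x i \<le> y i"
          then have "x i powr (-1/3) \<le> y i powr (-1/3)" using yi by (intro powr_mono2') auto
          then show False using lt by simp
        qed
      qed
      have "(\<Sum>i\<in>I. y i powr (4/3)) \<le> 2 * (\<Sum>i\<in>I. x i powr (4/3))"
        by (rule mass43[OF fin xp yp assms(5) ge])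
      also have "\<dots> \<le> 2 * r * (\<Sum>i\<in>I. x i powr (4/3))" using r1 Sx0 mult_right_mono[OF r1 Sx0] by simp
      finally show ?thesis .
    qed
  qed
  show ?thesis using first second unfolding r_def by simp
qed

end
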